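(* Let $\mathcal{C}$ be a finite set of classes and let $\ell_\star, \ell_a, \ell_b$ be $\mathcal{C}$-valued random variables on a common probability space, where $\ell_\star$ is the oracle label and $\ell_a, \ell_b$ are two predicted labels. Assume that for every $\mathcal{C}$-valued random variable $\ell_\times$ on this space with $\ell_\times \ne \ell_\star$ almost surely (an incorrect label), $$\mathbb{P}(\ell_b = \ell_\star \mid \ell_a \ne \ell_\star) \ge \mathbb{P}(\ell_b = \ell_\times \mid \ell_a \ne \ell_\star).$$ Then $\mathcal{L} := \mathbb{P}(\ell_a = \ell_b) \le \mathbb{P}(\ell_b = \ell_\star)$.
   Context: Conditional probabilities given an event of probability zero are taken to be $0$. *)

theory Defs
  imports "HOL-Probability.Probability"
begin

definition cond_prob :: "'a measure \<Rightarrow> 'a set \<Rightarrow> 'a set \<Rightarrow> real" where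
  "cond_prob M A B = (if measure M B = 0 then 0 else measure M (A \<inter> B) / measure M B)"

end

theory Submission
  imports Defs
begin

lemma eq_set_meas:
  assumes "finite C" "f \<in> measurable M (count_space C)" "g \<in> measurable M (count_space C)"
  shows "{\<omega>\<in>space M. f \<omega> = g \<omega>} \<in> sets M"
proof -
  have "{\<omega>\<in>space M. f \<omega> = g \<omega>} = (\<Union>c\<in>C. {\<omega>\<in>space M. f \<omega> = c} \<inter> {\<omega>\<in>space M. g \<omega> = c})"
    using assms(2) by (auto dest: measurable_space)
  also have "\<dots> \<in> sets M"
  proof (intro sets.finite_UN sets.Int)
    fix c assume c: "c \<in> C"
    have "f -` {c} \<inter> space M \<in> sets M" using c by (intro measurable_sets[OF assms(2)]) auto
    moreover have "g -` {c} \<inter> space M \<in> sets M" using c by (intro measurable_sets[OF assms(3)]) auto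
    moreover have "{\<omega>\<in>space M. f \<omega> = c} = f -` {c} \<inter> space M" "{\<omega>\<in>space M. g \<omega> = c} = g -` {c} \<inter> space M" by auto
    ultimately show "{\<omega>\<in>space M. f \<omega> = c} \<in> sets M" "{\<omega>\<in>space M. g \<omega> = c} \<in> sets M" by simp_all
  qed (use assms(1) in auto)
  finally show ?thesis .
qed

theorem theorem3:
  fixes M :: "'a measure" and C :: "'c set"
    and l_star l_a l_b :: "'a \<Rightarrow> 'c"
  assumes "prob_space M"
    and "finite C"
    and "l_star \<in> measurable M (count_space C)"
    and "l_a \<in> measurable M (count_space C)"
    and "l_b \<in> measurable M (count_space C)"
    and "\<And>l_x. l_x \<in> measurable M (count_space C) \<Longrightarrow>
           (AE \<omega> in M. l_x \<omega> \<noteq> l_star \<omega>) \<Longrightarrow>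
           cond_prob M {\<omega>\<in>space M. l_b \<omega> = l_star \<omega>} {\<omega>\<in>space M. l_a \<omega> \<noteq> l_star \<omega>}
           \<ge> cond_prob M {\<omega>\<in>space M. l_b \<omega> = l_x \<omega>} {\<omega>\<in>space M. l_a \<omega> \<noteq> l_star \<omega>}"
  shows "measure M {\<omega>\<in>space M. l_a \<omega> = l_b \<omega>} \<le> measure M {\<omega>\<in>space M. l_b \<omega> = l_star \<omega>}"
proof -
  interpret prob_space M by fact
  note ms = measurable_space[OF assms(3)] measurable_space[OF assms(4)] measurable_space[OF assms(5)]
  define A where "A = {\<omega>\<in>space M. l_a \<omega> \<noteq> l_star \<omega>}"
  define E where "E = {\<omega>\<in>space M. l_a \<omega> = l_star \<omega>}"
  have Em: "E \<in> sets M" unfolding E_def using eq_set_meas[OF assms(2,4,3)] .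
  have "A = space M - E" by (auto simp: A_def E_def)
  then have Am: "A \<in> sets M" using Em by auto
  have ABm: "{\<omega>\<in>space M. l_a \<omega> = l_b \<omega>} \<in> sets M" using eq_set_meas[OF assms(2,4,5)] .
  have BSm: "{\<omega>\<in>space M. l_b \<omega> = l_star \<omega>} \<in> sets M" using eq_set_meas[OF assms(2,5,3)] .
  have key: "measure M ({\<omega>\<in>space M. l_a \<omega> = l_b \<omega>} \<inter> A) \<le> measure M ({\<omega>\<in>space M. l_b \<omega> = l_star \<omega>} \<inter> A)"
  proof (cases "\<exists>c\<in>C. \<exists>d\<in>C. c \<noteq> d")
    case False
    then have "A = {}" unfolding A_def using ms by auto
    then show ?thesis by simp
  next
    case True
    then have "\<forall>c\<in>C. \<exists>d\<in>C. d \<noteq> c" by metis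
    then obtain oth where oth: "\<And>c. c \<in> C \<Longrightarrow> oth c \<in> C \<and> oth c \<noteq> c" by metis
    define lx where "lx = (\<lambda>\<omega>. if \<omega> \<in> A then l_a \<omega> else oth (l_star \<omega>))"
    have othm: "oth \<in> measurable (count_space C) (count_space C)"
      using oth by (auto simp: measurable_count_space_eq1)
    have lxm: "lx \<in> measurable M (count_space C)"
      unfolding lx_def
      by (rule measurable_If_set[OF assms(4) measurable_compose[OF assms(3) othm]])
         (use Am in \<open>simp add: A_def\<close>)
    have "AE \<omega> in M. lx \<omega> \<noteq> l_star \<omega>"
    proof (rule AE_I2)
      fix \<omega> assume "\<omega> \<in> space M"
      then show "lx \<omega> \<noteq> l_star \<omega>" using ms oth[of "l_star \<omega>"] by (auto simp: lx_def A_def)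
    qed
    from assms(6)[OF lxm this]
    have ge: "cond_prob M {\<omega>\<in>space M. l_b \<omega> = lx \<omega>} A \<le> cond_prob M {\<omega>\<in>space M. l_b \<omega> = l_star \<omega>} A"
      unfolding A_def by simp
    have eqs: "{\<omega>\<in>space M. l_b \<omega> = lx \<omega>} \<inter> A = {\<omega>\<in>space M. l_a \<omega> = l_b \<omega>} \<inter> A"
      by (auto simp: lx_def A_def)
    show ?thesis
    proof (cases "measure M A = 0")
      case True
      then show ?thesis
        using finite_measure_mono[OF Int_lower2 Am, of "{\<omega>\<in>space M. l_a \<omega> = l_b \<omega>}"]
          measure_nonneg[of M "{\<omega>\<in>space M. l_b \<omega> = l_star \<omega>} \<inter> A"] True by linarith
    next
      case False
      then have pos: "measure M A > 0" using measure_nonneg[of M A] by linarith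
      from ge False have "measure M ({\<omega>\<in>space M. l_b \<omega> = lx \<omega>} \<inter> A) / measure M A \<le> measure M ({\<omega>\<in>space M. l_b \<omega> = l_star \<omega>} \<inter> A) / measure M A"
        unfolding cond_prob_def by simp
      then show ?thesis using pos eqs by (simp add: divide_right_mono_neg divide_le_cancel)
    qed
  qed
  have s1: "{\<omega>\<in>space M. l_a \<omega> = l_b \<omega>} \<inter> E = {\<omega>\<in>space M. l_b \<omega> = l_star \<omega>} \<inter> E"
    by (auto simp: E_def)
  have split: "\<And>S. S \<in> sets M \<Longrightarrow> S \<subseteq> space M \<Longrightarrow> measure M S = measure M (S \<inter> A) + measure M (S \<inter> E)"
  proof -
    fix S assume S: "S \<in> sets M" "S \<subseteq> space M"
    have "S = (S \<inter> A) \<union> (S \<inter> E)" "(S \<inter> A) \<inter> (S \<inter> E) = {}" using S by (auto simp: A_def E_def)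
    then show "measure M S = measure M (S \<inter> A) + measure M (S \<inter> E)"
      using S Am Em finite_measure_Union[of "S \<inter> A" "S \<inter> E"] by (simp add: sets.Int)
  qed
  show ?thesis
    using split[OF ABm sets.sets_into_space[OF ABm]] split[OF BSm sets.sets_into_space[OF BSm]] key by (simp only: s1)
qed

end
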